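(* Let $\mathcal Y$ be a finite set; write $\mathbf F(\mathcal Y,[0,1])$ and $\mathbf F(\mathcal Y,\mathbb R)$ for the sets of functions from $\mathcal Y$ to $[0,1]$ and to $\mathbb R$. Let $\mathcal M:\mathbf F(\mathcal Y,[0,1])\times\mathbf F(\mathcal Y,\mathbb R)\to\mathbf F(\mathcal Y,\mathbb R)$ and assume there exist $f_*\in\mathbf F(\mathcal Y,\mathbb R)$, $\rho\in(0,1)$ and $\beta>0$ such that for all $f\in\mathbf F(\mathcal Y,\mathbb R)$ and $\eta\in\mathbf F(\mathcal Y,[0,1])$: $\mathcal M(\eta,f)(y)\le f_*(y)$ for all $y\in\mathcal Y$, and $$\|f_*-\mathcal M(\eta,f)\|_\infty\le\rho\|f_*-f\|_\infty+\beta\|(f-f_* )_+\|_\infty+\beta\|\eta\|_\infty.$$ Consider: - a family $(\mathcal I^k_y)_{k\ge0,y\in\mathcal Y}$ of $\sigma$-fields with $\mathcal I^k_y\subset\mathcal I^{k+1}_{y'}$ for all $k\ge0$ and all $y,y'\in\mathcal Y$; - a random $\hat f_0\in\mathbf F(\mathcal Y,\mathbb R)$ with $\hat f_0(y)$ being $\mathcal I^0_y$-measurable for all $y$; - for each $k\ge0$, a random $\eta_k\in\mathbf F(\mathcal Y,[0,1])$ which is $\mathcal I^k_y$-measurable for all $y\in\mathcal Y$; - for each $k\ge1$, a random $\xi_k\in\mathbf F(\mathcal Y,\mathbb R)$ with $\xi_k(y)$ being $\mathcal I^k_y$-measurable for all $y$; - for each $k\ge0$, a random $\lambda_k\in\mathbf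 F(\mathcal Y,[0,1])$ with $\lambda_k(y)$ being $\mathcal I^k_y$-measurable for all $y$. Assume that almost surely, for all $y\in\mathcal Y$, $\lim_k\eta_k(y)=0$, $\sum_{k\ge0}\lambda_k(y)=\infty$ and $\sum_{k\ge0}(\lambda_k(y))^2<\infty$, and that there is a constant $C>0$ such that for all $k\ge0$ and $y\in\mathcal Y$, $\mathbb E[\xi_{k+1}(y)\mid\mathcal I^k_y]=0$ and $\mathbb E[(\xi_{k+1}(y))^2\mid\mathcal I^k_y]\le C$. Define recursively, for $k\ge0$ and $y\in\mathcal Y$, $$\hat f_{k+1}(y)=\hat f_k(y)+\lambda_k(y)\big(\mathcal M(\eta_k,\hat f_k)(y)-\hat f_k(y)+\xi_{k+1}(y)\big).$$ Then almost surely, $\lim_{k\to\infty}\hat f_k(y)=f_*(y)$ for all $y\in\mathcal Y$.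
   Context: $\|\cdot\|_\infty$ denotes the max norm over $\mathcal Y$ and $(h)_+(y)=\max\{h(y),0\}$. *)

theory Defs
  imports "HOL-Probability.Probability"
begin

definition supnorm :: "('y::finite \<Rightarrow> real) \<Rightarrow> real" where
  "supnorm h = Max (range (\<lambda>y. \<bar>h y\<bar>))"

definition pospart :: "('y \<Rightarrow> real) \<Rightarrow> ('y \<Rightarrow> real)" where
  "pospart h = (\<lambda>y. max (h y) 0)"

end

theory Submission
  imports Defs
begin


lemma subalg_trans_meas:
  assumes "subalgebra M A" "subalgebra M B" "sets A \<subseteq> sets B"
    and "f \<in> borel_measurable A"
  shows "f \<in> borel_measurable B"
proof -
  have "subalgebra B A" using assms(1,2,3) unfolding subalgebra_def by auto
  then show ?thesis using measurable_from_subalg assms(4) by blast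
qed



lemma stop_sum:
  fixes X :: "nat \<Rightarrow> real"
  assumes S: "\<And>n. S n = (\<Sum>j<n. X j)" and i: "i \<in> {m..m+p}" and e: "\<epsilon> \<le> \<bar>S i - S m\<bar>" "0 < \<epsilon>"
  shows "\<epsilon> \<le> \<bar>\<Sum>j<m+p. (if m \<le> j \<and> (\<forall>i\<in>{m..j}. \<bar>S i - S m\<bar> < \<epsilon>) then X j else 0)\<bar>"
proof -
  define i0 where "i0 = (LEAST i. m \<le> i \<and> \<epsilon> \<le> \<bar>S i - S m\<bar>)"
  have P: "m \<le> i \<and> \<epsilon> \<le> \<bar>S i - S m\<bar>" using i e by auto
  have i0: "m \<le> i0" "\<epsilon> \<le> \<bar>S i0 - S m\<bar>" using LeastI[of "\<lambda>i. m \<le> i \<and> \<epsilon> \<le> \<bar>S i - S m\<bar>", OF P]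
    unfolding i0_def by auto
  have i0le: "i0 \<le> i" using Least_le[of "\<lambda>i. m \<le> i \<and> \<epsilon> \<le> \<bar>S i - S m\<bar>", OF P] unfolding i0_def by auto
  have iff: "(m \<le> j \<and> (\<forall>i\<in>{m..j}. \<bar>S i - S m\<bar> < \<epsilon>)) \<longleftrightarrow> (m \<le> j \<and> j < i0)" for j
  proof
    assume H: "m \<le> j \<and> (\<forall>i\<in>{m..j}. \<bar>S i - S m\<bar> < \<epsilon>)"
    show "m \<le> j \<and> j < i0"
    proof (rule ccontr)
      assume "\<not> (m \<le> j \<and> j < i0)"
      then have "i0 \<in> {m..j}" using H i0 by auto
      then show False using H i0 by fastforce
    qed
  next
    assume H: "m \<le> j \<and> j < i0"
    have "\<bar>S i' - S m\<bar> < \<epsilon>" if "i' \<in> {m..j}" for i'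
    proof -
      have "i' < i0" using that H by auto
      then have "\<not> (m \<le> i' \<and> \<epsilon> \<le> \<bar>S i' - S m\<bar>)" using not_less_Least unfolding i0_def by blast
      then show ?thesis using that by auto
    qed
    then show "m \<le> j \<and> (\<forall>i\<in>{m..j}. \<bar>S i - S m\<bar> < \<epsilon>)" using H by auto
  qed
  have "(\<Sum>j<m+p. (if m \<le> j \<and> (\<forall>i\<in>{m..j}. \<bar>S i - S m\<bar> < \<epsilon>) then X j else 0))
      = (\<Sum>j<m+p. (if m \<le> j \<and> j < i0 then X j else 0))"
    using iff by (intro sum.cong) auto
  also have "\<dots> = (\<Sum>j\<in>{..<m+p} \<inter> {j. m \<le> j \<and> j < i0}. X j)"
    by (simp add: sum.If_cases)
  also have "{..<m+p} \<inter> {j. m \<le> j \<and> j < i0} = {m..<i0}" using i0le i by auto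
  also have "(\<Sum>j\<in>{m..<i0}. X j) = S i0 - S m"
    unfolding S using sum_diff_nat_ivl[of 0 m i0 X] i0 by (simp add: atLeast0LessThan)
  finally show ?thesis using i0 by simp
qed


lemma tail_tendsto:
  fixes f :: "nat \<Rightarrow> real"
  assumes "summable f"
  shows "(\<lambda>m. \<Sum>n. f (n + m)) \<longlonglongrightarrow> 0"
proof -
  have "(\<lambda>m. suminf f - (\<Sum>i<m. f i)) \<longlonglongrightarrow> suminf f - suminf f"
    by (intro tendsto_diff tendsto_const summable_LIMSEQ assms)
  moreover have "(\<lambda>m. \<Sum>n. f (n + m)) = (\<lambda>m. suminf f - (\<Sum>i<m. f i))"
    using suminf_split_initial_segment[OF assms] by (auto simp: algebra_simps)
  ultimately show ?thesis by simp
qed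

lemma trunc_bound:
  fixes l :: "nat \<Rightarrow> real" and N :: real
  assumes N0: "0 \<le> N"
  shows "(\<Sum>j<n. (if (\<Sum>i\<le>j. (l i)\<^sup>2) \<le> N then l j else 0)\<^sup>2) \<le> N" (is "?L \<le> N")
proof -
  define A where "A = {..<n} \<inter> {j. (\<Sum>i\<le>j. (l i)\<^sup>2) \<le> N}"
  have "?L = (\<Sum>j<n. (if (\<Sum>i\<le>j. (l i)\<^sup>2) \<le> N then (l j)\<^sup>2 else 0))"
    by (intro sum.cong) auto
  also have "\<dots> = (\<Sum>j\<in>A. (l j)\<^sup>2)" unfolding A_def by (simp add: sum.If_cases)
  finally have L: "?L = (\<Sum>j\<in>A. (l j)\<^sup>2)" .
  show ?thesis
  proof (cases "A = {}")
    case True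
    then show ?thesis using L N0 by simp
  next
    case False
    have fin: "finite A" unfolding A_def by simp
    define J where "J = Max A"
    have JA: "J \<in> A" unfolding J_def using Max_in[OF fin False] .
    have sub: "A \<subseteq> {..J}" unfolding J_def using Max_ge[OF fin] by auto
    have "(\<Sum>j\<in>A. (l j)\<^sup>2) \<le> (\<Sum>j\<le>J. (l j)\<^sup>2)" by (rule sum_mono2[OF _ sub]) auto
    also have "\<dots> \<le> N" using JA unfolding A_def by auto
    finally show ?thesis using L by simp
  qed
qed

locale mds = prob_space M for M :: "'a measure" +
  fixes G :: "nat \<Rightarrow> 'a measure" and x :: "nat \<Rightarrow> 'a \<Rightarrow> real" and C :: real
  assumes subG: "\<And>k. subalgebra M (G k)"
    and monoG: "\<And>i j. i \<le> j \<Longrightarrow> sets (G i) \<subseteq> sets (G j)"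
    and x_meas: "\<And>k. x k \<in> borel_measurable (G (Suc k))"
    and Cpos: "0 < C"
    and ce0: "\<And>k. AE \<omega> in M. real_cond_exp M (G k) (x k) \<omega> = 0"
    and ce2: "\<And>k. AE \<omega> in M. nn_cond_exp M (G k) (\<lambda>\<omega>. ennreal ((x k \<omega>)\<^sup>2)) \<omega> \<le> ennreal C"
begin

lemma sfs: "sigma_finite_subalgebra M (G k)"
proof -
  have "finite_measure_subalgebra M (G k)"
    by (simp add: finite_measure_axioms finite_measure_subalgebra.intro finite_measure_subalgebra_axioms.intro subG)
  then show ?thesis using finite_measure_subalgebra_is_sigma_finite by blast
qed

lemma lift: "i \<le> j \<Longrightarrow> f \<in> borel_measurable (G i) \<Longrightarrow> f \<in> borel_measurable (G j)"
  using subalg_trans_meas[OF subG subG monoG] by blast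

lemma toM: "f \<in> borel_measurable (G i) \<Longrightarrow> f \<in> borel_measurable M"
  using measurable_from_subalg[OF subG] by blast

lemma xM[measurable]: "x k \<in> borel_measurable M"
  using toM[OF x_meas] .

lemma sq_bound:
  assumes c: "c \<in> borel_measurable (G k)" and cb: "\<And>\<omega>. \<bar>c \<omega>\<bar> \<le> 1"
  shows "integrable M (\<lambda>\<omega>. (c \<omega>)\<^sup>2 * (x k \<omega>)\<^sup>2)"
    "(\<integral>\<omega>. (c \<omega>)\<^sup>2 * (x k \<omega>)\<^sup>2 \<partial>M) \<le> C * (\<integral>\<omega>. (c \<omega>)\<^sup>2 \<partial>M)"
proof -
  interpret S: sigma_finite_subalgebra M "G k" by (rule sfs)
  have cM[measurable]: "c \<in> borel_measurable M" using toM[OF c] .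
  have c2G: "(\<lambda>\<omega>. ennreal ((c \<omega>)\<^sup>2)) \<in> borel_measurable (G k)" using c by measurable
  have intc: "integrable M (\<lambda>\<omega>. (c \<omega>)\<^sup>2)"
  proof (rule integrable_const_bound[where B=1])
    show "AE \<omega> in M. norm ((c \<omega>)\<^sup>2) \<le> 1" using cb by (auto simp: abs_square_le_1)
  qed simp
  have "(\<integral>\<^sup>+\<omega>. ennreal ((c \<omega>)\<^sup>2 * (x k \<omega>)\<^sup>2) \<partial>M) = (\<integral>\<^sup>+\<omega>. ennreal ((c \<omega>)\<^sup>2) * ennreal ((x k \<omega>)\<^sup>2) \<partial>M)"
    by (simp add: ennreal_mult)
  also have "\<dots> = (\<integral>\<^sup>+\<omega>. ennreal ((c \<omega>)\<^sup>2) * nn_cond_exp M (G k) (\<lambda>\<omega>. ennreal ((x k \<omega>)\<^sup>2)) \<omega> \<partial>M)"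
    by (rule S.nn_cond_exp_intg[symmetric]) (use c2G in auto)
  also have "\<dots> \<le> (\<integral>\<^sup>+\<omega>. ennreal ((c \<omega>)\<^sup>2) * ennreal C \<partial>M)"
  proof (rule nn_integral_mono_AE)
    show "AE \<omega> in M. ennreal ((c \<omega>)\<^sup>2) * nn_cond_exp M (G k) (\<lambda>\<omega>. ennreal ((x k \<omega>)\<^sup>2)) \<omega> \<le> ennreal ((c \<omega>)\<^sup>2) * ennreal C"
      using ce2[of k] by eventually_elim (rule mult_left_mono, auto)
  qed
  also have "\<dots> = (\<integral>\<^sup>+\<omega>. ennreal ((c \<omega>)\<^sup>2 * C) \<partial>M)"
    using Cpos by (simp add: ennreal_mult)
  also have "\<dots> = ennreal (\<integral>\<omega>. (c \<omega>)\<^sup>2 * C \<partial>M)"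
    by (rule nn_integral_eq_integral) (use intc Cpos in auto)
  finally have le: "(\<integral>\<^sup>+\<omega>. ennreal ((c \<omega>)\<^sup>2 * (x k \<omega>)\<^sup>2) \<partial>M) \<le> ennreal (C * (\<integral>\<omega>. (c \<omega>)\<^sup>2 \<partial>M))"
    by (simp add: mult.commute)
  show int: "integrable M (\<lambda>\<omega>. (c \<omega>)\<^sup>2 * (x k \<omega>)\<^sup>2)"
  proof (rule integrableI_bounded)
    have "(\<integral>\<^sup>+\<omega>. ennreal (norm ((c \<omega>)\<^sup>2 * (x k \<omega>)\<^sup>2)) \<partial>M) = (\<integral>\<^sup>+\<omega>. ennreal ((c \<omega>)\<^sup>2 * (x k \<omega>)\<^sup>2) \<partial>M)"
      by simp
    also have "\<dots> < \<infinity>" using le by (simp add: le_less_trans)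
    finally show "(\<integral>\<^sup>+\<omega>. ennreal (norm ((c \<omega>)\<^sup>2 * (x k \<omega>)\<^sup>2)) \<partial>M) < \<infinity>" .
  qed simp
  have "ennreal (\<integral>\<omega>. (c \<omega>)\<^sup>2 * (x k \<omega>)\<^sup>2 \<partial>M) \<le> ennreal (C * (\<integral>\<omega>. (c \<omega>)\<^sup>2 \<partial>M))"
    using le nn_integral_eq_integral[OF int] by simp
  moreover have "0 \<le> C * (\<integral>\<omega>. (c \<omega>)\<^sup>2 \<partial>M)" using Cpos by simp
  ultimately show "(\<integral>\<omega>. (c \<omega>)\<^sup>2 * (x k \<omega>)\<^sup>2 \<partial>M) \<le> C * (\<integral>\<omega>. (c \<omega>)\<^sup>2 \<partial>M)"
    by (simp add: ennreal_le_iff)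
qed

lemma x2_int: "integrable M (\<lambda>\<omega>. (x k \<omega>)\<^sup>2)"
  using sq_bound(1)[of "\<lambda>_. 1" k] by simp

lemma centered:
  assumes Z: "Z \<in> borel_measurable (G k)" and Zi: "integrable M (\<lambda>\<omega>. (Z \<omega>)\<^sup>2)"
  shows "integrable M (\<lambda>\<omega>. Z \<omega> * x k \<omega>)" "(\<integral>\<omega>. Z \<omega> * x k \<omega> \<partial>M) = 0"
proof -
  interpret S: sigma_finite_subalgebra M "G k" by (rule sfs)
  have ZM[measurable]: "Z \<in> borel_measurable M" using toM[OF Z] .
  show int: "integrable M (\<lambda>\<omega>. Z \<omega> * x k \<omega>)"
  proof (rule Bochner_Integration.integrable_bound[OF Bochner_Integration.integrable_add[OF Zi x2_int[of k]]])
    show "AE \<omega> in M. norm (Z \<omega> * x k \<omega>) \<le> norm ((Z \<omega>)\<^sup>2 + (x k \<omega>)\<^sup>2)"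
    proof (rule AE_I2)
      fix \<omega>
      have "0 \<le> (\<bar>Z \<omega>\<bar> - \<bar>x k \<omega>\<bar>)\<^sup>2" by simp
      then have "2 * \<bar>Z \<omega>\<bar> * \<bar>x k \<omega>\<bar> \<le> (Z \<omega>)\<^sup>2 + (x k \<omega>)\<^sup>2"
        by (simp add: power2_eq_square algebra_simps)
      moreover have "0 \<le> \<bar>Z \<omega>\<bar> * \<bar>x k \<omega>\<bar>" by simp
      moreover have "norm (Z \<omega> * x k \<omega>) = \<bar>Z \<omega>\<bar> * \<bar>x k \<omega>\<bar>" by (simp add: abs_mult)
      moreover have "norm ((Z \<omega>)\<^sup>2 + (x k \<omega>)\<^sup>2) = (Z \<omega>)\<^sup>2 + (x k \<omega>)\<^sup>2" by simp
      ultimately show "norm (Z \<omega> * x k \<omega>) \<le> norm ((Z \<omega>)\<^sup>2 + (x k \<omega>)\<^sup>2)"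
        by linarith
    qed
  qed simp
  have "(\<integral>\<omega>. Z \<omega> * x k \<omega> \<partial>M) = (\<integral>\<omega>. Z \<omega> * real_cond_exp M (G k) (x k) \<omega> \<partial>M)"
    by (rule S.real_cond_exp_intg(2)[symmetric]) (use int Z in auto)
  also have "\<dots> = (\<integral>\<omega>. 0 \<partial>M)"
    by (rule integral_cong_AE) (use ce0[of k] in auto)
  finally show "(\<integral>\<omega>. Z \<omega> * x k \<omega> \<partial>M) = 0" by simp
qed

lemma orth:
  assumes c: "\<And>j. c j \<in> borel_measurable (G j)" and cb: "\<And>j \<omega>. \<bar>c j \<omega>\<bar> \<le> 1"
  shows "(\<lambda>\<omega>. \<Sum>j<n. c j \<omega> * x j \<omega>) \<in> borel_measurable (G n)
    \<and> integrable M (\<lambda>\<omega>. (\<Sum>j<n. c j \<omega> * x j \<omega>)\<^sup>2)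
    \<and> (\<integral>\<omega>. (\<Sum>j<n. c j \<omega> * x j \<omega>)\<^sup>2 \<partial>M) = (\<Sum>j<n. \<integral>\<omega>. (c j \<omega>)\<^sup>2 * (x j \<omega>)\<^sup>2 \<partial>M)"
proof (induction n)
  case 0
  then show ?case by simp
next
  case (Suc n)
  define Y where "Y = (\<lambda>\<omega>. \<Sum>j<n. c j \<omega> * x j \<omega>)"
  have YG: "Y \<in> borel_measurable (G n)" and Yi: "integrable M (\<lambda>\<omega>. (Y \<omega>)\<^sup>2)"
    and YI: "(\<integral>\<omega>. (Y \<omega>)\<^sup>2 \<partial>M) = (\<Sum>j<n. \<integral>\<omega>. (c j \<omega>)\<^sup>2 * (x j \<omega>)\<^sup>2 \<partial>M)"
    using Suc.IH unfolding Y_def by auto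
  have YM[measurable]: "Y \<in> borel_measurable M" using toM[OF YG] .
  have cM[measurable]: "c n \<in> borel_measurable M" using toM[OF c] .
  have ZG: "(\<lambda>\<omega>. Y \<omega> * c n \<omega>) \<in> borel_measurable (G n)" using YG c[of n] by simp
  have Zi: "integrable M (\<lambda>\<omega>. (Y \<omega> * c n \<omega>)\<^sup>2)"
  proof (rule Bochner_Integration.integrable_bound[OF Yi])
    show "AE \<omega> in M. norm ((Y \<omega> * c n \<omega>)\<^sup>2) \<le> norm ((Y \<omega>)\<^sup>2)"
    proof (rule AE_I2)
      fix \<omega>
      have "(c n \<omega>)\<^sup>2 \<le> 1" using cb[of n \<omega>] by (simp add: abs_square_le_1)
      then have "(Y \<omega>)\<^sup>2 * (c n \<omega>)\<^sup>2 \<le> (Y \<omega>)\<^sup>2 * 1" by (intro mult_left_mono) auto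
      then show "norm ((Y \<omega> * c n \<omega>)\<^sup>2) \<le> norm ((Y \<omega>)\<^sup>2)" by (simp add: power_mult_distrib)
    qed
  qed simp
  have cent: "integrable M (\<lambda>\<omega>. Y \<omega> * c n \<omega> * x n \<omega>)" "(\<integral>\<omega>. Y \<omega> * c n \<omega> * x n \<omega> \<partial>M) = 0"
    using centered[OF ZG Zi] by auto
  have sq: "integrable M (\<lambda>\<omega>. (c n \<omega>)\<^sup>2 * (x n \<omega>)\<^sup>2)" using sq_bound(1)[OF c cb] .
  have eq: "(\<lambda>\<omega>. (\<Sum>j<Suc n. c j \<omega> * x j \<omega>)\<^sup>2) = (\<lambda>\<omega>. ((Y \<omega>)\<^sup>2 + 2 * (Y \<omega> * c n \<omega> * x n \<omega>)) + (c n \<omega>)\<^sup>2 * (x n \<omega>)\<^sup>2)"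
    by (rule ext) (simp add: Y_def power2_eq_square algebra_simps)
  have meas: "(\<lambda>\<omega>. \<Sum>j<Suc n. c j \<omega> * x j \<omega>) \<in> borel_measurable (G (Suc n))"
  proof -
    have "(\<lambda>\<omega>. \<Sum>j<Suc n. c j \<omega> * x j \<omega>) = (\<lambda>\<omega>. Y \<omega> + c n \<omega> * x n \<omega>)"
      by (simp add: Y_def)
    moreover have "Y \<in> borel_measurable (G (Suc n))" using lift[OF _ YG] by simp
    moreover have "c n \<in> borel_measurable (G (Suc n))" using lift[OF _ c[of n]] by simp
    ultimately show ?thesis using x_meas[of n] by simp
  qed
  have i1: "integrable M (\<lambda>\<omega>. (Y \<omega>)\<^sup>2 + 2 * (Y \<omega> * c n \<omega> * x n \<omega>))"
    using Yi cent(1) by simp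
  show ?case
    unfolding eq using meas i1 sq cent(2) YI
    by (simp add: Bochner_Integration.integral_add i1 sq Yi cent(1))
qed

lemma S_meas:
  assumes a: "\<And>j. a j \<in> borel_measurable (G j)" and ab: "\<And>j \<omega>. \<bar>a j \<omega>\<bar> \<le> 1"
  shows "(\<lambda>\<omega>. \<Sum>j<n. a j \<omega> * x j \<omega>) \<in> borel_measurable (G n)"
  using orth[OF a ab] by blast

lemma kolmo:
  assumes a: "\<And>j. a j \<in> borel_measurable (G j)" and ab: "\<And>j \<omega>. \<bar>a j \<omega>\<bar> \<le> 1" and eps: "0 < \<epsilon>"
  defines "S \<equiv> \<lambda>n \<omega>. \<Sum>j<n. a j \<omega> * x j \<omega>"
  shows "measure M {\<omega>\<in>space M. \<exists>i\<in>{m..m+p}. \<epsilon> \<le> \<bar>S i \<omega> - S m \<omega>\<bar>}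
     \<le> C / \<epsilon>\<^sup>2 * (\<Sum>j\<in>{m..<m+p}. \<integral>\<omega>. (a j \<omega>)\<^sup>2 \<partial>M)"
proof -
  have SG: "S n \<in> borel_measurable (G n)" for n unfolding S_def using S_meas[OF a ab] .
  define c where "c = (\<lambda>j \<omega>. if m \<le> j \<and> (\<forall>i\<in>{m..j}. \<bar>S i \<omega> - S m \<omega>\<bar> < \<epsilon>) then a j \<omega> else 0)"
  have cb: "\<bar>c j \<omega>\<bar> \<le> 1" for j \<omega> using ab[of j \<omega>] by (auto simp: c_def)
  have cG: "c j \<in> borel_measurable (G j)" for j
  proof (cases "m \<le> j")
    case True
    have SiG: "\<forall>i\<in>{m..j}. S i \<in> borel_measurable (G j)" using lift[OF _ SG] by auto
    have SmG[measurable]: "S m \<in> borel_measurable (G j)" using lift[OF True SG] .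
    have aG[measurable]: "a j \<in> borel_measurable (G j)" using a .
    have pr: "Measurable.pred (G j) (\<lambda>\<omega>. \<forall>i\<in>{m..j}. \<bar>S i \<omega> - S m \<omega>\<bar> < \<epsilon>)"
    proof (rule pred_intros_finite(3))
      fix i assume "i \<in> {m..j}"
      then have [measurable]: "S i \<in> borel_measurable (G j)" using SiG by auto
      show "Measurable.pred (G j) (\<lambda>\<omega>. \<bar>S i \<omega> - S m \<omega>\<bar> < \<epsilon>)" by measurable
    qed simp
    have "c j = (\<lambda>\<omega>. if (\<forall>i\<in>{m..j}. \<bar>S i \<omega> - S m \<omega>\<bar> < \<epsilon>) then a j \<omega> else 0)"
      using True by (auto simp: c_def)
    also have "\<dots> \<in> borel_measurable (G j)" using pr by measurable
    finally show ?thesis .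
  next
    case False
    then have "c j = (\<lambda>_. 0)" by (auto simp: c_def)
    then show ?thesis by simp
  qed
  define Y where "Y = (\<lambda>\<omega>. \<Sum>j<m+p. c j \<omega> * x j \<omega>)"
  have O: "Y \<in> borel_measurable (G (m+p))" "integrable M (\<lambda>\<omega>. (Y \<omega>)\<^sup>2)"
    "(\<integral>\<omega>. (Y \<omega>)\<^sup>2 \<partial>M) = (\<Sum>j<m+p. \<integral>\<omega>. (c j \<omega>)\<^sup>2 * (x j \<omega>)\<^sup>2 \<partial>M)"
    using orth[OF cG cb, of "m+p"] unfolding Y_def by auto
  have YM[measurable]: "Y \<in> borel_measurable M" using toM[OF O(1)] .
  have aM[measurable]: "a j \<in> borel_measurable M" for j using toM[OF a] .
  have inta: "integrable M (\<lambda>\<omega>. (a j \<omega>)\<^sup>2)" for j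
  proof (rule integrable_const_bound[where B=1])
    show "AE \<omega> in M. norm ((a j \<omega>)\<^sup>2) \<le> 1" using ab by (auto simp: abs_square_le_1)
  qed simp
  have intc: "integrable M (\<lambda>\<omega>. (c j \<omega>)\<^sup>2)" for j
  proof (rule integrable_const_bound[where B=1])
    show "AE \<omega> in M. norm ((c j \<omega>)\<^sup>2) \<le> 1" using cb by (auto simp: abs_square_le_1)
  qed (use toM[OF cG] in simp)
  have cle: "(\<integral>\<omega>. (c j \<omega>)\<^sup>2 \<partial>M) \<le> (if m \<le> j then \<integral>\<omega>. (a j \<omega>)\<^sup>2 \<partial>M else 0)" for j
  proof (cases "m \<le> j")
    case True
    have "(\<integral>\<omega>. (c j \<omega>)\<^sup>2 \<partial>M) \<le> (\<integral>\<omega>. (a j \<omega>)\<^sup>2 \<partial>M)"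
      by (rule integral_mono[OF intc inta]) (auto simp: c_def)
    then show ?thesis using True by simp
  next
    case False
    then show ?thesis by (simp add: c_def)
  qed
  have "(\<integral>\<omega>. (Y \<omega>)\<^sup>2 \<partial>M) \<le> (\<Sum>j<m+p. C * (if m \<le> j then \<integral>\<omega>. (a j \<omega>)\<^sup>2 \<partial>M else 0))"
    unfolding O(3)
  proof (rule sum_mono)
    fix j assume "j \<in> {..<m+p}"
    have "(\<integral>\<omega>. (c j \<omega>)\<^sup>2 * (x j \<omega>)\<^sup>2 \<partial>M) \<le> C * (\<integral>\<omega>. (c j \<omega>)\<^sup>2 \<partial>M)"
      using sq_bound(2)[OF cG cb] .
    also have "\<dots> \<le> C * (if m \<le> j then \<integral>\<omega>. (a j \<omega>)\<^sup>2 \<partial>M else 0)"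
      using cle[of j] Cpos by (intro mult_left_mono) auto
    finally show "(\<integral>\<omega>. (c j \<omega>)\<^sup>2 * (x j \<omega>)\<^sup>2 \<partial>M) \<le> C * (if m \<le> j then \<integral>\<omega>. (a j \<omega>)\<^sup>2 \<partial>M else 0)" .
  qed
  also have "\<dots> = C * (\<Sum>j<m+p. (if m \<le> j then \<integral>\<omega>. (a j \<omega>)\<^sup>2 \<partial>M else 0))"
    by (simp add: sum_distrib_left)
  also have "(\<Sum>j<m+p. (if m \<le> j then \<integral>\<omega>. (a j \<omega>)\<^sup>2 \<partial>M else 0)) = (\<Sum>j\<in>{m..<m+p}. \<integral>\<omega>. (a j \<omega>)\<^sup>2 \<partial>M)"
  proof -
    have "(\<Sum>j<m+p. (if m \<le> j then \<integral>\<omega>. (a j \<omega>)\<^sup>2 \<partial>M else 0)) = (\<Sum>j\<in>{..<m+p} \<inter> {j. m \<le> j}. \<integral>\<omega>. (a j \<omega>)\<^sup>2 \<partial>M)"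
      by (simp add: sum.If_cases)
    also have "{..<m+p} \<inter> {j. m \<le> j} = {m..<m+p}" by auto
    finally show ?thesis .
  qed
  finally have IY: "(\<integral>\<omega>. (Y \<omega>)\<^sup>2 \<partial>M) \<le> C * (\<Sum>j\<in>{m..<m+p}. \<integral>\<omega>. (a j \<omega>)\<^sup>2 \<partial>M)" .
  have sub: "{\<omega>\<in>space M. \<exists>i\<in>{m..m+p}. \<epsilon> \<le> \<bar>S i \<omega> - S m \<omega>\<bar>} \<subseteq> {\<omega>\<in>space M. (Y \<omega>)\<^sup>2 \<ge> \<epsilon>\<^sup>2}"
  proof safe
    fix \<omega> i assume "\<omega> \<in> space M" "i \<in> {m..m+p}" "\<epsilon> \<le> \<bar>S i \<omega> - S m \<omega>\<bar>"
    then have "\<epsilon> \<le> \<bar>\<Sum>j<m+p. (if m \<le> j \<and> (\<forall>i\<in>{m..j}. \<bar>S i \<omega> - S m \<omega>\<bar> < \<epsilon>) then a j \<omega> * x j \<omega> else 0)\<bar>"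
      by (intro stop_sum[where S="\<lambda>n. S n \<omega>"]) (auto simp: S_def eps)
    also have "(\<Sum>j<m+p. (if m \<le> j \<and> (\<forall>i\<in>{m..j}. \<bar>S i \<omega> - S m \<omega>\<bar> < \<epsilon>) then a j \<omega> * x j \<omega> else 0)) = Y \<omega>"
      unfolding Y_def c_def by (intro sum.cong) auto
    finally have "\<epsilon> \<le> \<bar>Y \<omega>\<bar>" .
    then have "\<epsilon>\<^sup>2 \<le> \<bar>Y \<omega>\<bar>\<^sup>2" using eps by (intro power_mono) auto
    then show "\<epsilon>\<^sup>2 \<le> (Y \<omega>)\<^sup>2" by simp
  qed
  have "measure M {\<omega>\<in>space M. \<exists>i\<in>{m..m+p}. \<epsilon> \<le> \<bar>S i \<omega> - S m \<omega>\<bar>} \<le> measure M {\<omega>\<in>space M. (Y \<omega>)\<^sup>2 \<ge> \<epsilon>\<^sup>2}"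
    by (rule finite_measure_mono[OF sub]) measurable
  also have "\<dots> \<le> (\<integral>\<omega>. (Y \<omega>)\<^sup>2 \<partial>M) / \<epsilon>\<^sup>2"
    by (rule integral_Markov_inequality_measure[OF O(2), where A="space M"]) (use eps in auto)
  also have "\<dots> \<le> C * (\<Sum>j\<in>{m..<m+p}. \<integral>\<omega>. (a j \<omega>)\<^sup>2 \<partial>M) / \<epsilon>\<^sup>2"
    using IY eps by (intro divide_right_mono) auto
  finally show ?thesis by simp
qed

lemma core:
  assumes a: "\<And>j. a j \<in> borel_measurable (G j)" and ab: "\<And>j \<omega>. \<bar>a j \<omega>\<bar> \<le> 1"
    and K: "\<And>n. (\<Sum>j<n. \<integral>\<omega>. (a j \<omega>)\<^sup>2 \<partial>M) \<le> K"
  shows "AE \<omega> in M. summable (\<lambda>j. a j \<omega> * x j \<omega>)"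
proof -
  define S where "S = (\<lambda>n \<omega>. \<Sum>j<n. a j \<omega> * x j \<omega>)"
  have SM[measurable]: "S n \<in> borel_measurable M" for n unfolding S_def using toM[OF S_meas[OF a ab]] .
  define s where "s = (\<lambda>j. \<integral>\<omega>. (a j \<omega>)\<^sup>2 \<partial>M)"
  have s0: "0 \<le> s j" for j unfolding s_def by simp
  have ss: "summable s" by (rule summableI_nonneg_bounded[OF s0]) (use K in \<open>simp add: s_def\<close>)
  define T where "T = (\<lambda>m. \<Sum>n. s (n + m))"
  have T0: "T \<longlonglongrightarrow> 0" unfolding T_def by (rule tail_tendsto[OF ss])
  have partT: "(\<Sum>j\<in>{m..<m+p}. s j) \<le> T m" for m p
  proof -
    have "(\<Sum>j\<in>{m..<m+p}. s j) = (\<Sum>j\<in>{0..<p}. s (j + m))"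
      using sum.shift_bounds_nat_ivl[of s 0 m p] by (simp add: add.commute)
    also have "\<dots> \<le> T m" unfolding T_def atLeast0LessThan
      by (rule sum_le_suminf) (use summable_ignore_initial_segment[OF ss] s0 in auto)
    finally show ?thesis .
  qed
  define Bad where "Bad = (\<lambda>\<epsilon>::real. {\<omega>\<in>space M. \<forall>m. \<exists>i\<ge>m. \<epsilon> \<le> \<bar>S i \<omega> - S m \<omega>\<bar>})"
  have Bad_sets: "Bad \<epsilon> \<in> sets M" for \<epsilon> unfolding Bad_def by measurable
  have Bad_null: "Bad \<epsilon> \<in> null_sets M" if eps: "0 < \<epsilon>" for \<epsilon>
  proof -
    have bnd: "measure M (Bad \<epsilon>) \<le> C / \<epsilon>\<^sup>2 * T m" for m
    proof -
      define A where "A = (\<lambda>p. {\<omega>\<in>space M. \<exists>i\<in>{m..m+p}. \<epsilon> \<le> \<bar>S i \<omega> - S m \<omega>\<bar>})"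
      have As: "range A \<subseteq> sets M" unfolding A_def by (auto intro!: pred_intros_finite)
      have Ainc: "incseq A" unfolding A_def incseq_def by force
      have "(\<lambda>p. measure M (A p)) \<longlonglongrightarrow> measure M (\<Union>p. A p)"
        by (rule Lim_measure_incseq[OF As Ainc]) (simp add: emeasure_eq_measure)
      moreover have "measure M (A p) \<le> C / \<epsilon>\<^sup>2 * T m" for p
      proof -
        have "measure M (A p) \<le> C / \<epsilon>\<^sup>2 * (\<Sum>j\<in>{m..<m+p}. s j)"
          unfolding A_def S_def s_def by (rule kolmo[OF a ab eps])
        also have "\<dots> \<le> C / \<epsilon>\<^sup>2 * T m"
          using partT[of m p] Cpos by (intro mult_left_mono) auto
        finally show ?thesis .
      qed
      ultimately have "measure M (\<Union>p. A p) \<le> C / \<epsilon>\<^sup>2 * T m"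
        by (intro LIMSEQ_le_const2) auto
      moreover have "Bad \<epsilon> \<subseteq> (\<Union>p. A p)"
      proof
        fix \<omega> assume "\<omega> \<in> Bad \<epsilon>"
        then obtain i where "\<omega> \<in> space M" "i \<ge> m" "\<epsilon> \<le> \<bar>S i \<omega> - S m \<omega>\<bar>" unfolding Bad_def by blast
        then have "\<omega> \<in> A (i - m)" unfolding A_def by auto
        then show "\<omega> \<in> (\<Union>p. A p)" by blast
      qed
      then have "measure M (Bad \<epsilon>) \<le> measure M (\<Union>p. A p)"
        by (intro finite_measure_mono) (use As in auto)
      ultimately show ?thesis by linarith
    qed
    have "(\<lambda>m. C / \<epsilon>\<^sup>2 * T m) \<longlonglongrightarrow> C / \<epsilon>\<^sup>2 * 0"
      by (intro tendsto_mult tendsto_const T0)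
    then have "measure M (Bad \<epsilon>) \<le> 0"
      by (intro LIMSEQ_le_const[where X="\<lambda>m. C / \<epsilon>\<^sup>2 * T m"]) (use bnd in auto)
    then have "measure M (Bad \<epsilon>) = 0" by (simp add: measure_nonneg antisym)
    then show ?thesis using Bad_sets by (simp add: emeasure_eq_measure null_sets_def)
  qed
  have "AE \<omega> in M. \<forall>r::nat. \<omega> \<notin> Bad (1 / Suc r)"
    unfolding AE_all_countable by (intro allI AE_not_in Bad_null) simp
  then show ?thesis
  proof (rule AE_mp[OF _ AE_I2[OF impI]])
    fix \<omega> assume \<omega>: "\<omega> \<in> space M" and H: "\<forall>r::nat. \<omega> \<notin> Bad (1 / Suc r)"
    have "Cauchy (\<lambda>n. S n \<omega>)"
    proof (rule metric_CauchyI)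
      fix e :: real assume e: "0 < e"
      obtain r :: nat where r: "1 / Suc r < e / 2"
        using e by (metis half_gt_zero nat_approx_posE)
      from H[rule_format, of r] \<omega> obtain m where m: "\<And>i. i \<ge> m \<Longrightarrow> \<bar>S i \<omega> - S m \<omega>\<bar> < 1 / Suc r"
        unfolding Bad_def by (auto simp: not_le) (meson not_le)
      show "\<exists>M. \<forall>i\<ge>M. \<forall>j\<ge>M. dist (S i \<omega>) (S j \<omega>) < e"
      proof (intro exI allI impI)
        fix i j assume "m \<le> i" "m \<le> j"
        then have "\<bar>S i \<omega> - S m \<omega>\<bar> < e / 2" "\<bar>S j \<omega> - S m \<omega>\<bar> < e / 2" using m r by fastforce+
        then show "dist (S i \<omega>) (S j \<omega>) < e" unfolding dist_real_def by linarith
      qed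
    qed
    then show "summable (\<lambda>j. a j \<omega> * x j \<omega>)"
      unfolding summable_iff_convergent S_def Cauchy_convergent_iff .
  qed
qed

lemma mart_conv:
  assumes l: "\<And>j. l j \<in> borel_measurable (G j)" and lr: "\<And>j \<omega>. 0 \<le> l j \<omega> \<and> l j \<omega> \<le> 1"
    and as: "AE \<omega> in M. summable (\<lambda>j. (l j \<omega>)\<^sup>2)"
  shows "AE \<omega> in M. summable (\<lambda>j. l j \<omega> * x j \<omega>)"
proof -
  define a where "a = (\<lambda>(N::nat) j \<omega>. if (\<Sum>i\<le>j. (l i \<omega>)\<^sup>2) \<le> real N then l j \<omega> else 0)"
  have aG: "a N j \<in> borel_measurable (G j)" for N j
  proof -
    have "(\<lambda>\<omega>. \<Sum>i\<le>j. (l i \<omega>)\<^sup>2) \<in> borel_measurable (G j)"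
      by (intro borel_measurable_sum borel_measurable_power lift[OF _ l]) auto
    moreover have "l j \<in> borel_measurable (G j)" using l .
    ultimately show ?thesis unfolding a_def by measurable
  qed
  have ab: "\<bar>a N j \<omega>\<bar> \<le> 1" for N j \<omega> using lr[of j \<omega>] by (auto simp: a_def)
  have "AE \<omega> in M. summable (\<lambda>j. a N j \<omega> * x j \<omega>)" for N
  proof (rule core[OF aG ab])
    fix n
    have aM: "a N j \<in> borel_measurable M" for j using toM[OF aG] .
    have ia: "integrable M (\<lambda>\<omega>. (a N j \<omega>)\<^sup>2)" for j
    proof (rule integrable_const_bound[where B=1])
      show "AE \<omega> in M. norm ((a N j \<omega>)\<^sup>2) \<le> 1" using ab by (auto simp: abs_square_le_1)
    qed (use aM in simp)
    have "(\<Sum>j<n. \<integral>\<omega>. (a N j \<omega>)\<^sup>2 \<partial>M) = (\<integral>\<omega>. (\<Sum>j<n. (a N j \<omega>)\<^sup>2) \<partial>M)"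
      by (rule Bochner_Integration.integral_sum[symmetric]) (use ia in auto)
    also have "\<dots> \<le> (\<integral>\<omega>. real N \<partial>M)"
      by (rule integral_mono) (use ia trunc_bound[of "real N"] in \<open>auto simp: a_def\<close>)
    also have "\<dots> = real N" by (simp add: prob_space)
    finally show "(\<Sum>j<n. \<integral>\<omega>. (a N j \<omega>)\<^sup>2 \<partial>M) \<le> real N" .
  qed
  then have "AE \<omega> in M. \<forall>N. summable (\<lambda>j. a N j \<omega> * x j \<omega>)" unfolding AE_all_countable by blast
  then show ?thesis using as
  proof eventually_elim
    case (elim \<omega>)
    obtain N :: nat where N: "suminf (\<lambda>j. (l j \<omega>)\<^sup>2) \<le> real N" using real_arch_simple by blast
    have "a N j \<omega> = l j \<omega>" for j
    proof -
      have "(\<Sum>i\<le>j. (l i \<omega>)\<^sup>2) \<le> suminf (\<lambda>j. (l j \<omega>)\<^sup>2)"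
        using sum_le_suminf[OF elim(2), of "{..j}"] by simp
      then show ?thesis using N by (simp add: a_def)
    qed
    then show ?case using elim(1) by (metis (no_types, lifting) ext)
  qed
qed

end


lemma nonsum_big:
  fixes l :: "nat \<Rightarrow> real"
  assumes l0: "\<And>k. 0 \<le> l k" and ns: "\<not> summable l"
  shows "\<exists>n0. \<forall>n\<ge>n0. B \<le> (\<Sum>j<n. l j)"
proof -
  have "\<exists>n0. B \<le> (\<Sum>j<n0. l j)"
  proof (rule ccontr)
    assume "\<not> ?thesis"
    then have "\<And>n. (\<Sum>j<n. l j) \<le> B" by (simp add: not_le less_imp_le)
    then have "summable l" by (rule summableI_nonneg_bounded[OF l0])
    then show False using ns by simp
  qed
  then obtain n0 where n0: "B \<le> (\<Sum>j<n0. l j)" by blast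
  have "B \<le> (\<Sum>j<n. l j)" if "n \<ge> n0" for n
  proof -
    have "(\<Sum>j<n0. l j) \<le> (\<Sum>j<n. l j)" by (rule sum_mono2) (use that l0 in auto)
    then show ?thesis using n0 by simp
  qed
  then show ?thesis by blast
qed

lemma L1:
  fixes x a l :: "nat \<Rightarrow> real"
  assumes rec: "\<And>k. x (Suc k) \<le> (1 - l k) * x k + l k * a k"
    and lr: "\<And>k. 0 \<le> l k \<and> l k \<le> 1"
    and ns: "\<not> summable l"
    and ae: "\<And>\<epsilon>. \<epsilon> > 0 \<Longrightarrow> eventually (\<lambda>k. a k \<le> A + \<epsilon>) sequentially"
    and eps: "\<epsilon> > 0"
  shows "eventually (\<lambda>k. x k \<le> A + \<epsilon>) sequentially"
proof -
  define e where "e = \<epsilon> / 2"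
  have e0: "e > 0" using eps by (simp add: e_def)
  obtain K where K: "\<And>k. k \<ge> K \<Longrightarrow> a k \<le> A + e"
    using ae[OF e0] unfolding eventually_sequentially by blast
  define w where "w = (\<lambda>k. x k - A - e)"
  have wrec: "w (Suc k) \<le> (1 - l k) * w k" if "k \<ge> K" for k
  proof -
    have "l k * a k \<le> l k * (A + e)" using K[OF that] lr[of k] by (intro mult_left_mono) auto
    then show ?thesis using rec[of k] by (simp add: w_def algebra_simps)
  qed
  define B0 where "B0 = max 0 (w K)"
  define S where "S = (\<lambda>n. \<Sum>j<n. l (j + K))"
  have S0: "0 \<le> S n" for n unfolding S_def using lr by (intro sum_nonneg) auto
  have bound: "w (K + n) \<le> B0 * exp (- S n)" for n
  proof (induction n)
    case 0
    then show ?case by (simp add: B0_def S_def)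
  next
    case (Suc n)
    have l1: "0 \<le> 1 - l (K + n)" using lr[of "K+n"] by simp
    have "w (K + Suc n) \<le> (1 - l (K + n)) * w (K + n)" using wrec[of "K+n"] by simp
    also have "\<dots> \<le> (1 - l (K + n)) * (B0 * exp (- S n))" by (rule mult_left_mono[OF Suc.IH l1])
    also have "\<dots> \<le> exp (- l (K + n)) * (B0 * exp (- S n))"
    proof (rule mult_right_mono)
      show "1 - l (K + n) \<le> exp (- l (K + n))" using exp_ge_add_one_self[of "- l (K + n)"] by simp
      show "0 \<le> B0 * exp (- S n)" by (simp add: B0_def)
    qed
    also have "\<dots> = B0 * exp (- S (Suc n))"
      by (simp add: S_def exp_add[symmetric] algebra_simps)
    finally show ?case .
  qed
  have ns': "\<not> summable (\<lambda>j. l (j + K))" using ns by simp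
  obtain n0 where n0: "\<And>n. n \<ge> n0 \<Longrightarrow> B0 / e \<le> S n"
    using nonsum_big[of "\<lambda>j. l (j + K)", OF _ ns'] lr unfolding S_def by blast
  have "x k \<le> A + \<epsilon>" if "k \<ge> K + n0" for k
  proof -
    define n where "n = k - K"
    have kn: "k = K + n" and nn: "n \<ge> n0" using that by (auto simp: n_def)
    have B00: "0 \<le> B0" by (simp add: B0_def)
    have "exp (S n) \<ge> 1 + S n" by (rule exp_ge_add_one_self)
    have "B0 * exp (- S n) \<le> e"
    proof -
      have "B0 \<le> e * S n" using n0[OF nn] e0 by (simp add: field_simps)
      also have "\<dots> \<le> e * exp (S n)" using exp_ge_add_one_self[of "S n"] e0 by (intro mult_left_mono) linarith+
      finally have "B0 \<le> e * exp (S n)" .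
      then have "B0 * exp (- S n) \<le> e * exp (S n) * exp (- S n)" by (intro mult_right_mono) auto
      also have "\<dots> = e" by (simp add: exp_minus field_simps)
      finally show ?thesis .
    qed
    then have "w k \<le> e" using bound[of n] kn by simp
    then show ?thesis by (simp add: w_def e_def)
  qed
  then show ?thesis unfolding eventually_sequentially by blast
qed

lemma sup_ge: "\<bar>h y\<bar> \<le> supnorm (h :: 'y::finite \<Rightarrow> real)"
  unfolding supnorm_def by (rule Max_ge) auto

lemma sup_le: "(\<And>y. \<bar>h y\<bar> \<le> c) \<Longrightarrow> supnorm (h :: 'y::finite \<Rightarrow> real) \<le> c"
  unfolding supnorm_def by (subst Max_le_iff) auto

lemma sup_nonneg: "0 \<le> supnorm (h :: 'y::finite \<Rightarrow> real)"
  using sup_ge[of h undefined] by linarith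

lemma Det:
  fixes u d l :: "nat \<Rightarrow> 'y::finite \<Rightarrow> real" and e :: "nat \<Rightarrow> real" and \<rho> \<beta> :: real
  assumes rec: "\<And>k y. u (Suc k) y = u k y + l k y * (d k y - u k y)"
    and lr: "\<And>k y. 0 \<le> l k y \<and> l k y \<le> 1"
    and ns: "\<And>y. \<not> summable (\<lambda>k. l k y)"
    and dup: "\<And>k y. d k y \<le> e k"
    and dabs: "\<And>k y. \<bar>d k y\<bar> \<le> \<rho> * supnorm (u k) + \<beta> * supnorm (pospart (u k)) + e k"
    and e0: "e \<longlonglongrightarrow> 0"
    and rho: "0 < \<rho>" "\<rho> < 1" and beta: "0 < \<beta>"
  shows "(\<lambda>k. u k y) \<longlonglongrightarrow> 0"
proof -
  have e_ev: "eventually (\<lambda>k. e k \<le> \<epsilon>) sequentially" if "\<epsilon> > 0" for \<epsilon>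
    using order_tendstoD(2)[OF e0 that] by eventually_elim simp
  have rec': "u (Suc k) y = (1 - l k y) * u k y + l k y * d k y" for k y
    using rec[of k y] by (simp add: algebra_simps)
  have up: "eventually (\<lambda>k. u k y \<le> \<epsilon>) sequentially" if "\<epsilon> > 0" for \<epsilon> y
  proof -
    have "eventually (\<lambda>k. u k y \<le> 0 + \<epsilon>) sequentially"
    proof (rule L1[where a=e and l="\<lambda>k. l k y"])
      show "u (Suc k) y \<le> (1 - l k y) * u k y + l k y * e k" for k
        using rec'[of k y] dup[of k y] lr[of k y] by (simp add: mult_left_mono)
    qed (use lr ns e_ev that in auto)
    then show ?thesis by simp
  qed
  define c where "c = (\<lambda>k. \<beta> * supnorm (pospart (u k)) + e k)"
  have c_ev: "eventually (\<lambda>k. c k \<le> \<epsilon>) sequentially" if "\<epsilon> > 0" for \<epsilon>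
  proof -
    have "eventually (\<lambda>k. \<forall>y. u k y \<le> \<epsilon> / (2 * \<beta>)) sequentially"
      by (rule eventually_all_finite) (use up that beta in auto)
    moreover have "eventually (\<lambda>k. e k \<le> \<epsilon> / 2) sequentially" using e_ev[of "\<epsilon> / 2"] that by simp
    ultimately show ?thesis
    proof eventually_elim
      case (elim k)
      have "supnorm (pospart (u k)) \<le> \<epsilon> / (2 * \<beta>)"
        by (rule sup_le) (use elim that beta in \<open>auto simp: pospart_def\<close>)
      then have "\<beta> * supnorm (pospart (u k)) \<le> \<beta> * (\<epsilon> / (2 * \<beta>))" using beta by (intro mult_left_mono) auto
      also have "\<dots> = \<epsilon> / 2" using beta by simp
      finally show ?case using elim unfolding c_def by simp
    qed
  qed
  define B where "B = (\<lambda>k. supnorm (u k))"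
  have step: "\<bar>u (Suc k) y\<bar> \<le> (1 - l k y) * \<bar>u k y\<bar> + l k y * (\<rho> * B k + c k)" for k y
  proof -
    have "\<bar>u (Suc k) y\<bar> \<le> \<bar>(1 - l k y) * u k y\<bar> + \<bar>l k y * d k y\<bar>" using rec'[of k y] abs_triangle_ineq by simp
    also have "\<dots> = (1 - l k y) * \<bar>u k y\<bar> + l k y * \<bar>d k y\<bar>" using lr[of k y] by (simp add: abs_mult)
    also have "\<dots> \<le> (1 - l k y) * \<bar>u k y\<bar> + l k y * (\<rho> * B k + c k)"
      using dabs[of k y] lr[of k y] by (intro add_left_mono mult_left_mono) (auto simp: B_def c_def)
    finally show ?thesis .
  qed
  have B0: "0 \<le> B k" for k unfolding B_def by (rule sup_nonneg)
  obtain K1 where K1: "\<And>k. k \<ge> K1 \<Longrightarrow> c k \<le> 1"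
    using c_ev[of 1] unfolding eventually_sequentially by auto
  define Kb where "Kb = max (B K1) (1 / (1 - \<rho>))"
  have Kb0: "0 \<le> Kb" unfolding Kb_def using B0[of K1] by simp
  have Kbr: "\<rho> * Kb + 1 \<le> Kb"
  proof -
    have "1 / (1 - \<rho>) \<le> Kb" unfolding Kb_def by simp
    then have "1 \<le> (1 - \<rho>) * Kb" using rho by (simp add: field_simps)
    then show ?thesis by (simp add: algebra_simps)
  qed
  have bnd: "B (K1 + n) \<le> Kb" for n
  proof (induction n)
    case 0 then show ?case by (simp add: Kb_def)
  next
    case (Suc n)
    let ?k = "K1 + n"
    have "B (Suc ?k) \<le> Kb" unfolding B_def
    proof (rule sup_le)
      fix y
      have uk: "\<bar>u ?k y\<bar> \<le> Kb" using sup_ge[of "u ?k" y] Suc.IH unfolding B_def by simp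
      have ck: "\<rho> * B ?k + c ?k \<le> Kb"
      proof -
        have "\<rho> * B ?k \<le> \<rho> * Kb" using Suc.IH rho by (intro mult_left_mono) auto
        moreover have "c ?k \<le> 1" using K1[of ?k] by simp
        ultimately show ?thesis using Kbr by linarith
      qed
      have "\<bar>u (Suc ?k) y\<bar> \<le> (1 - l ?k y) * \<bar>u ?k y\<bar> + l ?k y * (\<rho> * B ?k + c ?k)" by (rule step)
      also have "\<dots> \<le> (1 - l ?k y) * Kb + l ?k y * Kb"
        using lr[of ?k y] uk ck by (intro add_mono mult_left_mono) auto
      also have "\<dots> = Kb" by (simp add: algebra_simps)
      finally show "\<bar>u (Suc ?k) y\<bar> \<le> Kb" .
    qed
    then show ?case by simp
  qed
  have bnd_ev: "eventually (\<lambda>k. B k \<le> Kb) sequentially"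
    unfolding eventually_sequentially
  proof (intro exI allI impI)
    fix k assume "K1 \<le> k"
    then show "B k \<le> Kb" using bnd[of "k - K1"] by simp
  qed
  have iter: "eventually (\<lambda>k. B k \<le> \<rho> * D + \<epsilon>) sequentially"
    if D0: "0 \<le> D" and DB: "eventually (\<lambda>k. B k \<le> D) sequentially" and eps: "\<epsilon> > 0" for D \<epsilon>
  proof -
    have "eventually (\<lambda>k. \<forall>y. \<bar>u k y\<bar> \<le> \<rho> * D + \<epsilon>) sequentially"
    proof (rule eventually_all_finite)
      fix y
      show "eventually (\<lambda>k. \<bar>u k y\<bar> \<le> \<rho> * D + \<epsilon>) sequentially"
      proof (rule L1[where a="\<lambda>k. \<rho> * B k + c k" and l="\<lambda>k. l k y"])
        fix \<epsilon>' :: real assume "\<epsilon>' > 0"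
        from DB c_ev[OF this] show "eventually (\<lambda>k. \<rho> * B k + c k \<le> \<rho> * D + \<epsilon>') sequentially"
        proof eventually_elim
          case (elim k)
          then have "\<rho> * B k \<le> \<rho> * D" using rho by (intro mult_left_mono) auto
          then show ?case using elim by simp
        qed
      qed (use step lr ns eps in auto)
    qed
    then show ?thesis
    proof eventually_elim
      case (elim k)
      then show ?case unfolding B_def by (intro sup_le) auto
    qed
  qed
  have conv: "eventually (\<lambda>k. B k \<le> \<delta>) sequentially" if "\<delta> > 0" for \<delta>
  proof -
    define h where "h = \<delta> / 2"
    have h0: "h > 0" using that by (simp add: h_def)
    have it: "eventually (\<lambda>k. B k \<le> \<rho> ^ n * Kb + h) sequentially" for n
    proof (induction n)
      case 0
      from bnd_ev show ?case by eventually_elim (use h0 in simp)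
    next
      case (Suc n)
      have q: "(1 - \<rho>) * h > 0" using rho h0 by simp
      have "eventually (\<lambda>k. B k \<le> \<rho> * (\<rho> ^ n * Kb + h) + (1 - \<rho>) * h) sequentially"
        by (rule iter[OF _ Suc.IH q]) (use Kb0 h0 rho in simp)
      then show ?case by eventually_elim (simp add: algebra_simps)
    qed
    have "(\<lambda>n. \<rho> ^ n * Kb) \<longlonglongrightarrow> 0 * Kb"
      by (intro tendsto_mult tendsto_const LIMSEQ_power_zero) (use rho in simp)
    then have "eventually (\<lambda>n. \<rho> ^ n * Kb < h) sequentially" using h0 by (simp add: order_tendstoD(2))
    then obtain n where nh: "\<rho> ^ n * Kb < h" by (auto simp: eventually_sequentially)
    from it[of n] show ?thesis by eventually_elim (use nh in \<open>simp add: h_def\<close>)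
  qed
  show ?thesis
  proof (rule order_tendstoI)
    fix a :: real assume a: "a < 0"
    have "- a / 2 > 0" using a by simp
    from conv[OF this] show "eventually (\<lambda>k. a < u k y) sequentially"
    proof eventually_elim
      case (elim k)
      then show ?case using sup_ge[of "u k" y] a unfolding B_def by linarith
    qed
  next
    fix a :: real assume a: "a > 0"
    have "a / 2 > 0" using a by simp
    from conv[OF this] show "eventually (\<lambda>k. u k y < a) sequentially"
    proof eventually_elim
      case (elim k)
      then show ?case using sup_ge[of "u k" y] a unfolding B_def by linarith
    qed
  qed
qed



lemma pathwise:
  fixes Mop :: "('y::finite \<Rightarrow> real) \<Rightarrow> ('y \<Rightarrow> real) \<Rightarrow> ('y \<Rightarrow> real)"
    and fstar :: "'y \<Rightarrow> real" and \<rho> \<beta> :: real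
    and F eta xi lam :: "nat \<Rightarrow> 'y \<Rightarrow> real"
  assumes rho: "0 < \<rho>" "\<rho> < 1" and beta: "0 < \<beta>"
    and M_le: "\<And>\<eta>' f y. (\<forall>z. 0 \<le> \<eta>' z \<and> \<eta>' z \<le> 1) \<Longrightarrow> Mop \<eta>' f y \<le> fstar y"
    and M_contr: "\<And>\<eta>' f. (\<forall>z. 0 \<le> \<eta>' z \<and> \<eta>' z \<le> 1) \<Longrightarrow>
        supnorm (\<lambda>y. fstar y - Mop \<eta>' f y)
          \<le> \<rho> * supnorm (\<lambda>y. fstar y - f y) + \<beta> * supnorm (pospart (\<lambda>y. f y - fstar y))
             + \<beta> * supnorm \<eta>'"
    and eta_range: "\<And>k y. 0 \<le> eta k y \<and> eta k y \<le> 1"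
    and lam_range: "\<And>k y. 0 \<le> lam k y \<and> lam k y \<le> 1"
    and etac: "\<And>y. (\<lambda>k. eta k y) \<longlonglongrightarrow> 0"
    and ns: "\<And>y. \<not> summable (\<lambda>k. lam k y)"
    and sX: "\<And>y. summable (\<lambda>k. lam k y * xi (Suc k) y)"
    and rec: "\<And>k y. F (Suc k) y = F k y + lam k y * (Mop (eta k) (F k) y - F k y + xi (Suc k) y)"
  shows "(\<lambda>k. F k y) \<longlonglongrightarrow> fstar y"
proof -
  define X where "X = (\<lambda>k y. lam k y * xi (Suc k) y)"
  define T where "T = (\<lambda>k y. \<Sum>n. X (n + k) y)"
  have sX': "summable (\<lambda>n. X (n + k) y)" for k y
    using summable_ignore_initial_segment[OF sX[of y], of k] unfolding X_def by simp
  have Trec: "T k y = X k y + T (Suc k) y" for k y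
  proof -
    have "(\<Sum>n. X (Suc n + k) y) = (\<Sum>n. X (n + k) y) - X (0 + k) y"
      by (rule suminf_split_head[OF sX'])
    then show ?thesis unfolding T_def by simp
  qed
  have T0: "(\<lambda>k. T k y) \<longlonglongrightarrow> 0" for y
    unfolding T_def by (rule tail_tendsto) (use sX in \<open>simp add: X_def\<close>)
  define ST where "ST = (\<lambda>k. \<Sum>y\<in>UNIV. \<bar>T k y\<bar>)"
  define SE where "SE = (\<lambda>k. \<Sum>y\<in>UNIV. \<bar>eta k y\<bar>)"
  have Tle: "\<bar>T k y\<bar> \<le> ST k" for k y unfolding ST_def by (rule member_le_sum) auto
  have Ele: "supnorm (eta k) \<le> SE k" for k unfolding SE_def
    by (rule sup_le) (rule member_le_sum, auto)
  have ST0: "0 \<le> ST k" for k unfolding ST_def by (simp add: sum_nonneg)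
  have SE0: "0 \<le> SE k" for k unfolding SE_def by (simp add: sum_nonneg)
  define e where "e = (\<lambda>k. (\<rho> + \<beta> + 1) * ST k + \<beta> * SE k)"
  have e0: "e \<longlonglongrightarrow> 0"
  proof -
    have a1: "(\<lambda>k. \<bar>T k y\<bar>) \<longlonglongrightarrow> 0" for y using tendsto_rabs[OF T0[of y]] by simp
    have a2: "(\<lambda>k. \<bar>eta k y\<bar>) \<longlonglongrightarrow> 0" for y using tendsto_rabs[OF etac[of y]] by simp
    have "ST \<longlonglongrightarrow> (\<Sum>y\<in>(UNIV::'y set). 0)" unfolding ST_def
      by (rule tendsto_sum) (rule a1)
    moreover have "SE \<longlonglongrightarrow> (\<Sum>y\<in>(UNIV::'y set). 0)" unfolding SE_def
      by (rule tendsto_sum) (rule a2)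
    ultimately have "e \<longlonglongrightarrow> (\<rho> + \<beta> + 1) * 0 + \<beta> * 0" unfolding e_def
      by (intro tendsto_add tendsto_mult tendsto_const) auto
    then show ?thesis by simp
  qed
  define u where "u = (\<lambda>k y. F k y + T k y - fstar y)"
  define d where "d = (\<lambda>k y. Mop (eta k) (F k) y + T k y - fstar y)"
  have er: "\<forall>z. 0 \<le> eta k z \<and> eta k z \<le> 1" for k using eta_range by auto
  have urec: "u (Suc k) y = u k y + lam k y * (d k y - u k y)" for k y
    using rec[of k y] Trec[of k y] unfolding u_def d_def X_def by (simp add: algebra_simps)
  have dup: "d k y \<le> e k" for k y
  proof -
    have "d k y \<le> T k y" using M_le[OF er[of k], of "F k" y] unfolding d_def by simp
    also have "\<dots> \<le> ST k" using Tle[of k y] by simp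
    also have "\<dots> \<le> e k" unfolding e_def using ST0[of k] SE0[of k] rho beta
      by (simp add: algebra_simps)
    finally show ?thesis .
  qed
  have dabs: "\<bar>d k y\<bar> \<le> \<rho> * supnorm (u k) + \<beta> * supnorm (pospart (u k)) + e k" for k y
  proof -
    have s1: "supnorm (\<lambda>y. fstar y - F k y) \<le> supnorm (u k) + ST k"
    proof (rule sup_le)
      fix y
      have "\<bar>fstar y - F k y\<bar> \<le> \<bar>u k y\<bar> + \<bar>T k y\<bar>" unfolding u_def by linarith
      then show "\<bar>fstar y - F k y\<bar> \<le> supnorm (u k) + ST k" using sup_ge[of "u k" y] Tle[of k y] by linarith
    qed
    have s2: "supnorm (pospart (\<lambda>y. F k y - fstar y)) \<le> supnorm (pospart (u k)) + ST k"
    proof (rule sup_le)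
      fix y
      have "\<bar>pospart (\<lambda>y. F k y - fstar y) y\<bar> \<le> \<bar>pospart (u k) y\<bar> + \<bar>T k y\<bar>"
        unfolding pospart_def u_def by auto
      then show "\<bar>pospart (\<lambda>y. F k y - fstar y) y\<bar> \<le> supnorm (pospart (u k)) + ST k"
        using sup_ge[of "pospart (u k)" y] Tle[of k y] by linarith
    qed
    have "\<bar>d k y\<bar> \<le> \<bar>fstar y - Mop (eta k) (F k) y\<bar> + \<bar>T k y\<bar>" unfolding d_def by linarith
    also have "\<dots> \<le> supnorm (\<lambda>y. fstar y - Mop (eta k) (F k) y) + ST k"
      using sup_ge[of "\<lambda>y. fstar y - Mop (eta k) (F k) y" y] Tle[of k y] by linarith
    also have "\<dots> \<le> \<rho> * supnorm (\<lambda>y. fstar y - F k y) + \<beta> * supnorm (pospart (\<lambda>y. F k y - fstar y))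
             + \<beta> * supnorm (eta k) + ST k"
      using M_contr[OF er[of k], of "F k"] by linarith
    also have "\<dots> \<le> \<rho> * (supnorm (u k) + ST k) + \<beta> * (supnorm (pospart (u k)) + ST k) + \<beta> * SE k + ST k"
      using s1 s2 Ele[of k] rho beta
      by (intro add_mono mult_left_mono order_refl) auto
    also have "\<dots> = \<rho> * supnorm (u k) + \<beta> * supnorm (pospart (u k)) + e k"
      unfolding e_def by (simp add: algebra_simps)
    finally show ?thesis .
  qed
  have "(\<lambda>k. u k y) \<longlonglongrightarrow> 0"
    by (rule Det[OF urec lam_range ns dup dabs e0 rho beta])
  then have "(\<lambda>k. u k y - T k y + fstar y) \<longlonglongrightarrow> 0 - 0 + fstar y"
    by (intro tendsto_add tendsto_diff T0 tendsto_const)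
  then show ?thesis unfolding u_def by simp
qed



theorem proposition4p2:
  fixes Mop :: "('y::finite \<Rightarrow> real) \<Rightarrow> ('y \<Rightarrow> real) \<Rightarrow> ('y \<Rightarrow> real)"
    and fstar :: "'y \<Rightarrow> real" and \<rho> \<beta> :: real
    and M :: "'a measure"
    and I :: "nat \<Rightarrow> 'y \<Rightarrow> 'a measure"
    and fhat :: "nat \<Rightarrow> 'a \<Rightarrow> 'y \<Rightarrow> real"
    and \<eta> \<xi> lam :: "nat \<Rightarrow> 'a \<Rightarrow> 'y \<Rightarrow> real"
  assumes rho: "0 < \<rho>" "\<rho> < 1" and beta: "0 < \<beta>"
    and M_le: "\<And>\<eta>' f y. (\<forall>z. 0 \<le> \<eta>' z \<and> \<eta>' z \<le> 1) \<Longrightarrow> Mop \<eta>' f y \<le> fstar y"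
    and M_contr: "\<And>\<eta>' f. (\<forall>z. 0 \<le> \<eta>' z \<and> \<eta>' z \<le> 1) \<Longrightarrow>
        supnorm (\<lambda>y. fstar y - Mop \<eta>' f y)
          \<le> \<rho> * supnorm (\<lambda>y. fstar y - f y) + \<beta> * supnorm (pospart (\<lambda>y. f y - fstar y))
             + \<beta> * supnorm \<eta>'"
    and P: "prob_space M"
    and sub: "\<And>k y. subalgebra M (I k y)"
    and filt: "\<And>k y y'. sets (I k y) \<subseteq> sets (I (Suc k) y')"
    and f0_meas: "\<And>y. (\<lambda>\<omega>. fhat 0 \<omega> y) \<in> borel_measurable (I 0 y)"
    and eta_range: "\<And>k \<omega> y. 0 \<le> \<eta> k \<omega> y \<and> \<eta> k \<omega> y \<le> 1"
    and eta_meas: "\<And>k y y'. (\<lambda>\<omega>. \<eta> k \<omega> y') \<in> borel_measurable (I k y)"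
    and xi_meas: "\<And>k y. 1 \<le> k \<Longrightarrow> (\<lambda>\<omega>. \<xi> k \<omega> y) \<in> borel_measurable (I k y)"
    and lam_range: "\<And>k \<omega> y. 0 \<le> lam k \<omega> y \<and> lam k \<omega> y \<le> 1"
    and lam_meas: "\<And>k y. (\<lambda>\<omega>. lam k \<omega> y) \<in> borel_measurable (I k y)"
    and as: "AE \<omega> in M. \<forall>y. (\<lambda>k. \<eta> k \<omega> y) \<longlonglongrightarrow> 0
                \<and> \<not> summable (\<lambda>k. lam k \<omega> y)
                \<and> summable (\<lambda>k. (lam k \<omega> y)\<^sup>2)"
    and noise: "\<exists>C>0. \<forall>k y.
        (AE \<omega> in M. real_cond_exp M (I k y) (\<lambda>\<omega>. \<xi> (Suc k) \<omega> y) \<omega> = 0)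
      \<and> (AE \<omega> in M. nn_cond_exp M (I k y) (\<lambda>\<omega>. ennreal ((\<xi> (Suc k) \<omega> y)\<^sup>2)) \<omega> \<le> ennreal C)"
    and rec: "\<And>k \<omega> y. fhat (Suc k) \<omega> y = fhat k \<omega> y
        + lam k \<omega> y * (Mop (\<eta> k \<omega>) (fhat k \<omega>) y - fhat k \<omega> y + \<xi> (Suc k) \<omega> y)"
  shows "AE \<omega> in M. \<forall>y. (\<lambda>k. fhat k \<omega> y) \<longlonglongrightarrow> fstar y"
  proof -
  obtain C where C: "C > 0" and Cn: "\<And>k y.
        (AE \<omega> in M. real_cond_exp M (I k y) (\<lambda>\<omega>. \<xi> (Suc k) \<omega> y) \<omega> = 0)
      \<and> (AE \<omega> in M. nn_cond_exp M (I k y) (\<lambda>\<omega>. ennreal ((\<xi> (Suc k) \<omega> y)\<^sup>2)) \<omega> \<le> ennreal C)"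
    using noise by blast
  have monoI: "sets (I i y) \<subseteq> sets (I j y)" if "i \<le> j" for i j y
    using that
  proof (induction j rule: dec_induct)
    case base then show ?case by simp
  next
    case (step n) then show ?case using filt[of n y y] by blast
  qed
  have summ: "AE \<omega> in M. summable (\<lambda>j. lam j \<omega> y * \<xi> (Suc j) \<omega> y)" for y
  proof -
    have "mds M (\<lambda>k. I k y) (\<lambda>k \<omega>. \<xi> (Suc k) \<omega> y) C"
    proof (rule mds.intro[OF P], rule mds_axioms.intro)
      show "\<And>k. subalgebra M (I k y)" by (rule sub)
      show "\<And>i j. i \<le> j \<Longrightarrow> sets (I i y) \<subseteq> sets (I j y)" by (rule monoI)
      show "\<And>k. (\<lambda>\<omega>. \<xi> (Suc k) \<omega> y) \<in> borel_measurable (I (Suc k) y)" by (rule xi_meas) simp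
      show "0 < C" by (rule C)
      show "\<And>k. AE \<omega> in M. real_cond_exp M (I k y) (\<lambda>\<omega>. \<xi> (Suc k) \<omega> y) \<omega> = 0" using Cn by blast
      show "\<And>k. AE \<omega> in M. nn_cond_exp M (I k y) (\<lambda>\<omega>. ennreal ((\<xi> (Suc k) \<omega> y)\<^sup>2)) \<omega> \<le> ennreal C"
        using Cn by blast
    qed
    then interpret mds M "\<lambda>k. I k y" "\<lambda>k \<omega>. \<xi> (Suc k) \<omega> y" C .
    have sq: "AE \<omega> in M. summable (\<lambda>j. (lam j \<omega> y)\<^sup>2)" using as by eventually_elim auto
    show ?thesis
      by (rule mart_conv[where l="\<lambda>j \<omega>. lam j \<omega> y", OF lam_meas lam_range sq])
  qed
  have "AE \<omega> in M. \<forall>y. summable (\<lambda>j. lam j \<omega> y * \<xi> (Suc j) \<omega> y)"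
    by (rule eventually_all_finite) (rule summ)
  with as show ?thesis
  proof eventually_elim
    case (elim \<omega>)
    show ?case
    proof
      fix y
      show "(\<lambda>k. fhat k \<omega> y) \<longlonglongrightarrow> fstar y"
      proof (rule pathwise[where Mop=Mop and \<rho>=\<rho> and \<beta>=\<beta> and eta="\<lambda>k. \<eta> k \<omega>" and xi="\<lambda>k. \<xi> k \<omega>"
            and lam="\<lambda>k. lam k \<omega>"])
        show "\<And>k y. fhat (Suc k) \<omega> y = fhat k \<omega> y + lam k \<omega> y * (Mop (\<eta> k \<omega>) (fhat k \<omega>) y - fhat k \<omega> y + \<xi> (Suc k) \<omega> y)"
          by (rule rec)
      qed (use rho beta M_le M_contr eta_range lam_range elim in auto)
    qed
  qed
qed

end
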